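(* For all integers $n\ge1$, $$\mathcal A\cap\gamma_{n+1}(\mathcal R)=\mathcal A_{2n-1}.$$
   Context: $\mathcal R=\mathcal R(\mathbb F_2)$ is the Riordan group of pairs $(g,f)$ of formal power series over $\mathbb F_2$ with $g=1+\cdots$, $f=t+\cdots$, product $(g_1,f_1)(g_2,f_2)=(g_1\cdot(g_2\circ f_1),\,f_2\circ f_1)$; it is a pro-2 group (inverse limit of its finite truncations) with the corresponding $t$-adic topology. $\mathcal A=\{(g,t)\}$ is the Appell subgroup and $\mathcal A_m=\{(g,t):g\equiv1\pmod{t^{m+1}}\}$. The lower central series is $\gamma_1(\mathcal R)=\mathcal R$, $\gamma_i(\mathcal R)=[\gamma_{i-1}(\mathcal R),\mathcal R]$, where $[X,Y]$ is the smallest closed subgroup containing all commutators $x^{-1}y^{-1}xy$, $x\in X$, $y\in Y$. *)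

theory Defs
  imports "HOL-Library.Z2" "HOL-Computational_Algebra.Formal_Power_Series" "HOL-Algebra.Group"
begin

type_synonym rio = "bit fps \<times> bit fps"

definition riordan :: "rio monoid" where
  "riordan = \<lparr> carrier = {(g, f). fps_nth g 0 = 1 \<and> fps_nth f 0 = 0 \<and> fps_nth f 1 = 1},
               mult = (\<lambda>(g1, f1) (g2, f2). (g1 * (g2 oo f1), f2 oo f1)),
               one = (1, fps_X) \<rparr>"

definition agree_upto :: "nat \<Rightarrow> rio \<Rightarrow> rio \<Rightarrow> bool" where
  "agree_upto N x y \<longleftrightarrow> (\<forall>k<N. fps_nth (fst x) k = fps_nth (fst y) k \<and> fps_nth (snd x) k = fps_nth (snd y) k)"

text \<open>Closed subsets of R in the t-adic (inverse-limit) topology.\<close>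
definition rclosed :: "rio set \<Rightarrow> bool" where
  "rclosed S \<longleftrightarrow> S \<subseteq> carrier riordan \<and>
     (\<forall>x\<in>carrier riordan. (\<forall>N. \<exists>s\<in>S. agree_upto N s x) \<longrightarrow> x \<in> S)"

definition commutator_set :: "rio set \<Rightarrow> rio set \<Rightarrow> rio set" where
  "commutator_set X Y = {inv\<^bsub>riordan\<^esub> x \<otimes>\<^bsub>riordan\<^esub> inv\<^bsub>riordan\<^esub> y \<otimes>\<^bsub>riordan\<^esub> x \<otimes>\<^bsub>riordan\<^esub> y | x y. x \<in> X \<and> y \<in> Y}"

definition closed_comm :: "rio set \<Rightarrow> rio set \<Rightarrow> rio set" where
  "closed_comm X Y = \<Inter>{H. subgroup H riordan \<and> rclosed H \<and> commutator_set X Y \<subseteq> H}"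

text \<open>Lower central series: lcs i = gamma_i for i \<ge> 1 (lcs 0 is set to R as a dummy).\<close>
fun lcs :: "nat \<Rightarrow> rio set" where
  "lcs 0 = carrier riordan"
| "lcs (Suc 0) = carrier riordan"
| "lcs (Suc (Suc i)) = closed_comm (lcs (Suc i)) (carrier riordan)"

definition appell :: "rio set" where
  "appell = {(g, fps_X) | g. fps_nth g 0 = 1}"

definition appell_m :: "nat \<Rightarrow> rio set" where
  "appell_m m = {(g, fps_X) | g. fps_nth g 0 = 1 \<and> (\<forall>k. 1 \<le> k \<and> k \<le> m \<longrightarrow> fps_nth g k = 0)}"

end

theory Submission imports Defs begin
unbundle fps_syntax

definition eqm :: "nat \<Rightarrow> bit fps \<Rightarrow> bit fps \<Rightarrow> bool" where
  "eqm M a b \<longleftrightarrow> (\<forall>i<M. a $ i = b $ i)"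

lemma eqm_refl[simp]: "eqm M a a" by (simp add: eqm_def)
lemma eqm_sym: "eqm M a b \<Longrightarrow> eqm M b a" by (simp add: eqm_def)
lemma eqm_trans: "eqm M a b \<Longrightarrow> eqm M b c \<Longrightarrow> eqm M a c" by (simp add: eqm_def)
lemma eqm_mono: "eqm M a b \<Longrightarrow> K \<le> M \<Longrightarrow> eqm K a b" by (simp add: eqm_def)
lemma eqm_add: "eqm M a b \<Longrightarrow> eqm M c d \<Longrightarrow> eqm M (a + c) (b + d)" by (simp add: eqm_def)
lemma eqm_diff: "eqm M a b \<Longrightarrow> eqm M c d \<Longrightarrow> eqm M (a - c) (b - d)" by (simp add: eqm_def)
lemma eqm_mult: "eqm M a b \<Longrightarrow> eqm M c d \<Longrightarrow> eqm M (a * c) (b * d)"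
  unfolding eqm_def fps_mult_nth by (auto intro!: sum.cong)
lemma eqm_power: "eqm M a b \<Longrightarrow> eqm M (a ^ k) (b ^ k)"
  by (induction k) (auto intro: eqm_mult)
lemma eqm_compose: "eqm M a b \<Longrightarrow> eqm M c d \<Longrightarrow> eqm M (a oo c) (b oo d)"
proof -
  assume ab: "eqm M a b" and cd: "eqm M c d"
  show ?thesis unfolding eqm_def fps_compose_nth
  proof (intro allI impI sum.cong refl)
    fix i j assume "i < M" "j \<in> {0..i}"
    then show "a $ j * c ^ j $ i = b $ j * d ^ j $ i"
      using ab eqm_power[OF cd, of j] by (simp add: eqm_def)
  qed
qed
lemma eqm_Xpow: "eqm K a b \<Longrightarrow> eqm (M + K) (fps_X ^ M * a) (fps_X ^ M * b)"
  unfolding eqm_def fps_X_power_mult_nth by auto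
lemma eqm_Xpow0: "eqm M (fps_X ^ M * a) 0"
  unfolding eqm_def fps_X_power_mult_nth by auto

lemma eqm_0_factor: "eqm M a 0 \<Longrightarrow> a = fps_X ^ M * fps_shift M a"
  by (rule fps_ext) (auto simp: eqm_def fps_X_power_mult_nth)

lemma two_fps_bit: "(2::bit fps) = 0"
  by (metis bit_2_eq_0 fps_const_0_eq_0 fps_const_add fps_const_1_eq_1 one_add_one)

lemma frob: "((a::bit fps) + b) ^ 2 = a ^ 2 + b ^ 2"
proof -
  have "(a + b) ^ 2 = a^2 + b^2 + 2 * a * b" by (simp add: power2_eq_square algebra_simps)
  then show ?thesis by (simp add: two_fps_bit)
qed


lemma fps_idom_test: "(a::bit fps) * b = 0 \<Longrightarrow> a = 0 \<or> b = 0" by simp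

lemma lag_sq:
  assumes p0: "\<phi> $ 0 = 0" and p1: "\<phi> $ 1 = 1"
  shows "\<exists>w. \<phi> ^ 2 = fps_X ^ 2 * w \<and> eqm 2 w 1"
proof -
  define \<psi> where "\<psi> = \<phi> - fps_X"
  have "eqm 2 \<psi> 0" using p0 p1 unfolding eqm_def \<psi>_def
    by (auto simp: less_2_cases_iff)
  then have ps: "\<psi> = fps_X ^ 2 * fps_shift 2 \<psi>" by (rule eqm_0_factor)
  define w where "w = 1 + fps_X ^ 2 * (fps_shift 2 \<psi>) ^ 2"
  have "\<phi> = fps_X + \<psi>" by (simp add: \<psi>_def)
  then have "\<phi> ^ 2 = fps_X ^ 2 + \<psi> ^ 2" by (simp add: frob)
  also have "\<psi> ^ 2 = fps_X ^ 4 * (fps_shift 2 \<psi>) ^ 2"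
    by (subst ps) (simp add: power_mult_distrib power_mult[symmetric])
  finally have "\<phi> ^ 2 = fps_X ^ 2 * w" unfolding w_def
    by (simp add: algebra_simps power_add[symmetric])
  moreover have "eqm 2 w 1" unfolding w_def
    using eqm_add[OF eqm_refl eqm_Xpow0[of 2 "(fps_shift 2 \<psi>) ^ 2"]] by simp
  ultimately show ?thesis by blast
qed

lemma lemA:
  assumes a0: "eqm (2*k) a 0" and p0: "\<phi> $ 0 = 0" and p1: "\<phi> $ 1 = 1"
  shows "eqm (2*k+2) (a oo \<phi>) a"
proof -
  obtain w where w: "\<phi> ^ 2 = fps_X ^ 2 * w" "eqm 2 w 1" using lag_sq[OF p0 p1] by blast
  define a' where "a' = fps_shift (2*k) a"
  have aa: "a = fps_X ^ (2*k) * a'" unfolding a'_def by (rule eqm_0_factor[OF a0])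
  have "a oo \<phi> = (fps_X ^ (2*k) oo \<phi>) * (a' oo \<phi>)"
    by (subst aa, rule fps_compose_mult_distrib[OF p0])
  also have "fps_X ^ (2*k) oo \<phi> = (\<phi>^2)^k" using fps_X_power_compose[OF p0, of "2*k"]
    by (simp only: power_mult)
  also have "\<dots> = fps_X ^ (2*k) * w ^ k" using w(1) by (simp add: power_mult_distrib power_mult)
  finally have e: "a oo \<phi> = fps_X ^ (2*k) * (w ^ k * (a' oo \<phi>))" by (simp add: algebra_simps)
  have "eqm 2 \<phi> fps_X" using p0 p1 unfolding eqm_def by (auto simp: less_2_cases_iff)
  then have "eqm 2 (a' oo \<phi>) (a' oo fps_X)" by (intro eqm_compose) auto
  then have "eqm 2 (w ^ k * (a' oo \<phi>)) (1 ^ k * a')"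
    using eqm_mult[OF eqm_power[OF w(2)]] by simp
  then have "eqm (2*k+2) (fps_X ^ (2*k) * (w ^ k * (a' oo \<phi>))) (fps_X ^ (2*k) * (1 ^ k * a'))"
    by (rule eqm_Xpow)
  then show ?thesis using e aa by simp
qed

lemma lemB:
  assumes ps0: "eqm 2 \<psi> 0" and f0: "f $ 0 = 0" and fX: "eqm M f fps_X" and M2: "M \<ge> 2"
  shows "eqm (M+2) (\<psi> oo f) \<psi>"
proof -
  define \<psi>2 where "\<psi>2 = fps_shift 2 \<psi>"
  have ps: "\<psi> = fps_X ^ 2 * \<psi>2" unfolding \<psi>2_def by (rule eqm_0_factor[OF ps0])
  define \<epsilon> where "\<epsilon> = f - fps_X"
  have "eqm M \<epsilon> 0" using fX unfolding \<epsilon>_def eqm_def by auto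
  then have ee: "\<epsilon> = fps_X ^ M * fps_shift M \<epsilon>" by (rule eqm_0_factor)
  have "f = fps_X + \<epsilon>" by (simp add: \<epsilon>_def)
  then have "f ^ 2 = fps_X ^ 2 + \<epsilon> ^ 2" by (simp add: frob)
  also have "\<epsilon> ^ 2 = fps_X ^ (2*M) * (fps_shift M \<epsilon>) ^ 2"
    by (subst ee) (simp add: power_mult_distrib power_mult[symmetric] mult.commute)
  finally have f2: "f ^ 2 = fps_X ^ 2 + fps_X ^ (2*M) * (fps_shift M \<epsilon>) ^ 2" .
  have "\<psi> oo f = (fps_X ^ 2 oo f) * (\<psi>2 oo f)"
    by (subst ps, rule fps_compose_mult_distrib[OF f0])
  also have "fps_X ^ 2 oo f = f ^ 2" using fps_X_power_compose[OF f0] .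
  finally have e: "\<psi> oo f = fps_X ^ 2 * (\<psi>2 oo f) + fps_X ^ (2*M) * ((fps_shift M \<epsilon>) ^ 2 * (\<psi>2 oo f))"
    using f2 by (simp add: algebra_simps)
  have "eqm M (\<psi>2 oo f) (\<psi>2 oo fps_X)" by (intro eqm_compose fX eqm_refl)
  then have t1: "eqm (2+M) (fps_X ^ 2 * (\<psi>2 oo f)) (fps_X ^ 2 * \<psi>2)" using eqm_Xpow by fastforce
  have t2: "eqm (M+2) (fps_X ^ (2*M) * ((fps_shift M \<epsilon>) ^ 2 * (\<psi>2 oo f))) 0"
    using eqm_mono[OF eqm_Xpow0] M2 by simp
  have "eqm (M+2) (\<psi> oo f) (fps_X ^ 2 * \<psi>2 + 0)"
    unfolding e using eqm_add[OF t1[simplified add.commute] t2] .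
  then show ?thesis using ps by simp
qed


lemma R_carrier: "x \<in> carrier riordan \<longleftrightarrow> fst x $ 0 = 1 \<and> snd x $ 0 = 0 \<and> snd x $ 1 = 1"
  by (cases x) (simp add: riordan_def)
lemma R_carrier': "(g, f) \<in> carrier riordan \<longleftrightarrow> g $ 0 = 1 \<and> f $ 0 = 0 \<and> f $ 1 = 1"
  by (simp add: riordan_def)
lemma R_mult: "(g1, f1) \<otimes>\<^bsub>riordan\<^esub> (g2, f2) = (g1 * (g2 oo f1), f2 oo f1)"
  by (simp add: riordan_def)
lemma R_one: "\<one>\<^bsub>riordan\<^esub> = (1, fps_X)"
  by (simp add: riordan_def)

lemma compose_nth_1: "b $ 0 = 0 \<Longrightarrow> (a oo b) $ 1 = a $ 1 * b $ 1"
  by (simp add: fps_compose_nth)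
lemma compose_nth_Suc0: "b $ 0 = 0 \<Longrightarrow> (a oo b) $ Suc 0 = a $ Suc 0 * b $ Suc 0"
  by (simp add: fps_compose_nth)

lemma fps_inv_01: "fps_inv (f::bit fps) $ 0 = 0" "f $ 1 = 1 \<Longrightarrow> fps_inv f $ 1 = 1"
  by (simp_all add: fps_inv_def)

lemma R_group: "group riordan"
proof (rule groupI)
  fix x y assume "x \<in> carrier riordan" "y \<in> carrier riordan"
  then show "x \<otimes>\<^bsub>riordan\<^esub> y \<in> carrier riordan"
    by (cases x, cases y) (simp add: R_mult R_carrier' compose_nth_Suc0)
next
  show "\<one>\<^bsub>riordan\<^esub> \<in> carrier riordan" by (simp add: R_one R_carrier')
next
  fix x y z assume "x \<in> carrier riordan" "y \<in> carrier riordan" "z \<in> carrier riordan"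
  then show "x \<otimes>\<^bsub>riordan\<^esub> y \<otimes>\<^bsub>riordan\<^esub> z = x \<otimes>\<^bsub>riordan\<^esub> (y \<otimes>\<^bsub>riordan\<^esub> z)"
    by (cases x, cases y, cases z) (simp add: R_mult R_carrier' fps_compose_mult_distrib fps_compose_assoc mult.assoc)
next
  fix x assume "x \<in> carrier riordan"
  then show "\<one>\<^bsub>riordan\<^esub> \<otimes>\<^bsub>riordan\<^esub> x = x"
    by (cases x) (simp add: R_mult R_one R_carrier')
next
  fix x assume x: "x \<in> carrier riordan"
  obtain g f where gf: "x = (g, f)" by (cases x)
  have c: "g $ 0 = 1" "f $ 0 = 0" "f $ 1 = 1" using x gf by (auto simp: R_carrier')
  define y where "y = (inverse g oo fps_inv f, fps_inv f)"
  have "y \<in> carrier riordan" unfolding y_def R_carrier' using c fps_inv_01 by simp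
  moreover have "y \<otimes>\<^bsub>riordan\<^esub> x = \<one>\<^bsub>riordan\<^esub>"
    unfolding y_def gf R_mult R_one
    using c fps_inv_01 fps_inv_right[of f]
    by (simp add: fps_compose_mult_distrib[symmetric] inverse_mult_eq_1)
  ultimately show "\<exists>y\<in>carrier riordan. y \<otimes>\<^bsub>riordan\<^esub> x = \<one>\<^bsub>riordan\<^esub>" by blast
qed

interpretation R: group riordan by (rule R_group)


definition rcong :: "nat \<Rightarrow> rio \<Rightarrow> rio \<Rightarrow> bool" where
  "rcong M x y \<longleftrightarrow> eqm M (fst x) (fst y) \<and> eqm (M+2) (snd x) (snd y)"

definition SS :: "nat \<Rightarrow> rio set" where
  "SS n = {x \<in> carrier riordan. rcong (2*n) x \<one>\<^bsub>riordan\<^esub>}"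

lemma rcong_refl[simp]: "rcong M x x" by (simp add: rcong_def)
lemma rcong_sym: "rcong M x y \<Longrightarrow> rcong M y x" by (auto simp: rcong_def intro: eqm_sym)
lemma rcong_trans: "rcong M x y \<Longrightarrow> rcong M y z \<Longrightarrow> rcong M x z" by (auto simp: rcong_def intro: eqm_trans)

lemma rcong_mult: "rcong M x x' \<Longrightarrow> rcong M y y' \<Longrightarrow>
   rcong M (x \<otimes>\<^bsub>riordan\<^esub> y) (x' \<otimes>\<^bsub>riordan\<^esub> y')"
  apply (cases x, cases x', cases y, cases y')
  apply (simp add: R_mult rcong_def)
  apply (intro conjI eqm_mult eqm_compose)
  apply (auto intro: eqm_mono)
  done

lemma commute_lemma:
  assumes x: "x \<in> SS n" and y: "y \<in> carrier riordan"
  shows "rcong (2*n+2) (x \<otimes>\<^bsub>riordan\<^esub> y) (y \<otimes>\<^bsub>riordan\<^esub> x)"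
proof -
  obtain g f where gf: "x = (g, f)" by (cases x)
  obtain h \<phi> where hp: "y = (h, \<phi>)" by (cases y)
  have c: "g $ 0 = 1" "f $ 0 = 0" "f $ 1 = 1" "eqm (2*n) g 1" "eqm (2*n+2) f fps_X"
    using x gf by (auto simp: SS_def R_carrier' rcong_def R_one)
  have d: "h $ 0 = 1" "\<phi> $ 0 = 0" "\<phi> $ 1 = 1" using y hp by (auto simp: R_carrier')
  have t1: "eqm (2*n+2) (h oo f) h"
    using eqm_compose[OF eqm_refl c(5), of h] by simp
  have "eqm (2*n) (g - 1) 0" using c(4) by (simp add: eqm_def)
  then have "eqm (2*n+2) ((g - 1) oo \<phi>) (g - 1)" using lemA d by blast
  then have "eqm (2*n+2) (((g - 1) oo \<phi>) + 1) (g - 1 + 1)" by (rule eqm_add[OF _ eqm_refl])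
  then have t2: "eqm (2*n+2) (g oo \<phi>) g" by (simp add: fps_compose_sub_distrib)
  have A1: "eqm (2*n+2) (g * (h oo f)) (g * h)" using eqm_mult[OF eqm_refl t1] .
  have B1: "eqm (2*n+2) (h * (g oo \<phi>)) (g * h)"
    using eqm_mult[OF eqm_refl t2, of h] by (simp add: mult.commute)
  have fst: "eqm (2*n+2) (g * (h oo f)) (h * (g oo \<phi>))"
    by (rule eqm_trans[OF A1 eqm_sym[OF B1]])
  define \<psi> where "\<psi> = \<phi> - fps_X"
  define \<epsilon> where "\<epsilon> = f - fps_X"
  have ps0: "eqm 2 \<psi> 0" using d unfolding eqm_def \<psi>_def by (auto simp: less_2_cases_iff)
  have e1: "eqm (2*n+2+2) (\<psi> oo f) \<psi>" using lemB[OF ps0 c(2) c(5)] by simp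
  have "eqm (2*(n+1)) \<epsilon> 0" using c(5) unfolding \<epsilon>_def eqm_def by auto
  then have e2: "eqm (2*(n+1)+2) (\<epsilon> oo \<phi>) \<epsilon>" using lemA d by blast
  have p1: "\<phi> oo f = f + (\<psi> oo f)"
    unfolding \<psi>_def using c(2) by (simp add: fps_compose_sub_distrib)
  have p2: "f oo \<phi> = \<phi> + (\<epsilon> oo \<phi>)"
    unfolding \<epsilon>_def using d(1,2) by (simp add: fps_compose_sub_distrib)
  have X1: "eqm (2*n+2+2) (f + (\<psi> oo f)) (f + \<psi>)" by (rule eqm_add[OF eqm_refl e1])
  have e2': "eqm (2*n+2+2) (\<epsilon> oo \<phi>) \<epsilon>" using e2 by (simp add: algebra_simps)
  have Y1: "eqm (2*n+2+2) (\<phi> + (\<epsilon> oo \<phi>)) (\<phi> + \<epsilon>)" by (rule eqm_add[OF eqm_refl e2'])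
  have Z1: "f + \<psi> = \<phi> + \<epsilon>" unfolding \<psi>_def \<epsilon>_def by simp
  have snd: "eqm (2*n+2+2) (\<phi> oo f) (f oo \<phi>)" unfolding p1 p2
    using eqm_trans[OF X1 eqm_sym[OF Y1[folded Z1]]] .
  show ?thesis unfolding gf hp R_mult rcong_def using fst snd by simp
qed

lemma SS_subgroup: "subgroup (SS n) riordan"
proof (rule R.subgroupI)
  show "SS n \<subseteq> carrier riordan" by (auto simp: SS_def)
  have "\<one>\<^bsub>riordan\<^esub> \<in> SS n" using R.one_closed by (simp add: SS_def)
  then show "SS n \<noteq> {}" by blast
next
  fix a assume a: "a \<in> SS n"
  then have ac: "a \<in> carrier riordan" and r: "rcong (2*n) a \<one>\<^bsub>riordan\<^esub>" by (auto simp: SS_def)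
  have "rcong (2*n) (inv\<^bsub>riordan\<^esub> a \<otimes>\<^bsub>riordan\<^esub> \<one>\<^bsub>riordan\<^esub>) (inv\<^bsub>riordan\<^esub> a \<otimes>\<^bsub>riordan\<^esub> a)"
    by (intro rcong_mult rcong_refl rcong_sym[OF r])
  then show "inv\<^bsub>riordan\<^esub> a \<in> SS n" using ac by (simp add: SS_def)
next
  fix a b assume "a \<in> SS n" "b \<in> SS n"
  then show "a \<otimes>\<^bsub>riordan\<^esub> b \<in> SS n"
    using rcong_mult[of "2*n" a "\<one>\<^bsub>riordan\<^esub>" b "\<one>\<^bsub>riordan\<^esub>"] by (auto simp: SS_def)
qed

lemma agree_rcong: "agree_upto N s x \<Longrightarrow> M + 2 \<le> N \<Longrightarrow> rcong M s x"
  by (auto simp: agree_upto_def rcong_def eqm_def)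

lemma SS_closed: "rclosed (SS n)"
  unfolding rclosed_def
proof (intro conjI ballI impI)
  show "SS n \<subseteq> carrier riordan" by (auto simp: SS_def)
  fix x assume x: "x \<in> carrier riordan" and "\<forall>N. \<exists>s\<in>SS n. agree_upto N s x"
  then obtain s where s: "s \<in> SS n" "agree_upto (2*n+2) s x" by blast
  then have "rcong (2*n) s x" by (intro agree_rcong) auto
  then have "rcong (2*n) x \<one>\<^bsub>riordan\<^esub>" using s by (auto simp: SS_def intro: rcong_sym rcong_trans)
  then show "x \<in> SS n" using x by (simp add: SS_def)
qed

lemma comm_in_SS:
  assumes x: "x \<in> SS n" and y: "y \<in> carrier riordan"
  shows "inv\<^bsub>riordan\<^esub> x \<otimes>\<^bsub>riordan\<^esub> inv\<^bsub>riordan\<^esub> y \<otimes>\<^bsub>riordan\<^esub> x \<otimes>\<^bsub>riordan\<^esub> y \<in> SS (Suc n)"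
proof -
  have xc: "x \<in> carrier riordan" using x by (simp add: SS_def)
  let ?a = "y \<otimes>\<^bsub>riordan\<^esub> x" and ?b = "x \<otimes>\<^bsub>riordan\<^esub> y"
  have eq: "inv\<^bsub>riordan\<^esub> x \<otimes>\<^bsub>riordan\<^esub> inv\<^bsub>riordan\<^esub> y \<otimes>\<^bsub>riordan\<^esub> x \<otimes>\<^bsub>riordan\<^esub> y
      = inv\<^bsub>riordan\<^esub> ?a \<otimes>\<^bsub>riordan\<^esub> ?b"
    using xc y by (simp add: R.inv_mult_group R.m_assoc)
  have "rcong (2*n+2) ?b ?a" by (rule commute_lemma[OF x y])
  then have "rcong (2*n+2) (inv\<^bsub>riordan\<^esub> ?a \<otimes>\<^bsub>riordan\<^esub> ?b) (inv\<^bsub>riordan\<^esub> ?a \<otimes>\<^bsub>riordan\<^esub> ?a)"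
    by (rule rcong_mult[OF rcong_refl])
  then show ?thesis unfolding eq using xc y by (simp add: SS_def)
qed

lemma lcs_SS: "lcs (Suc n) \<subseteq> SS n"
proof (induction n)
  case 0
  show ?case by (auto simp: SS_def rcong_def R_one R_carrier eqm_def less_Suc_eq)
next
  case (Suc n)
  have "commutator_set (lcs (Suc n)) (carrier riordan) \<subseteq> SS (Suc n)"
    using Suc comm_in_SS unfolding commutator_set_def by blast
  then have "SS (Suc n) \<in> {H. subgroup H riordan \<and> rclosed H \<and> commutator_set (lcs (Suc n)) (carrier riordan) \<subseteq> H}"
    using SS_subgroup SS_closed by blast
  then show ?case by (auto simp: closed_comm_def)
qed

lemma dir1: "appell \<inter> lcs (n + 1) \<subseteq> appell_m (2 * n - 1)"
proof
  fix x assume "x \<in> appell \<inter> lcs (n + 1)"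
  then obtain g where x: "x = (g, fps_X)" "g $ 0 = 1" "x \<in> SS n" using lcs_SS[of n] by (auto simp: appell_def)
  then have "eqm (2*n) g 1" by (simp add: SS_def rcong_def R_one)
  then show "x \<in> appell_m (2 * n - 1)" using x by (auto simp: appell_m_def eqm_def)
qed


lemma inv_appell: "q $ 0 = 1 \<Longrightarrow> inv\<^bsub>riordan\<^esub> (q, fps_X) = (inverse q, fps_X)"
  by (rule R.inv_equality) (auto simp: R_mult R_one R_carrier' inverse_mult_eq_1)

lemma comm_appell:
  assumes q0: "q $ 0 = 1" and p0: "\<phi> $ 0 = 0" and p1: "\<phi> $ 1 = 1"
  shows "inv\<^bsub>riordan\<^esub> (q, fps_X) \<otimes>\<^bsub>riordan\<^esub> inv\<^bsub>riordan\<^esub> (inv\<^bsub>riordan\<^esub> (1, \<phi>))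
     \<otimes>\<^bsub>riordan\<^esub> (q, fps_X) \<otimes>\<^bsub>riordan\<^esub> inv\<^bsub>riordan\<^esub> (1, \<phi>) = (inverse q * (q oo \<phi>), fps_X)"
proof -
  have yc: "(1, \<phi>) \<in> carrier riordan" using p0 p1 by (simp add: R_carrier')
  define c where "c = inverse q * (q oo \<phi>)"
  have c0: "c $ 0 = 1" using q0 by (simp add: c_def)
  have cc: "(c, fps_X) \<in> carrier riordan" using c0 by (simp add: R_carrier')
  have "inv\<^bsub>riordan\<^esub> (q, fps_X) \<otimes>\<^bsub>riordan\<^esub> inv\<^bsub>riordan\<^esub> (inv\<^bsub>riordan\<^esub> (1, \<phi>))
     \<otimes>\<^bsub>riordan\<^esub> (q, fps_X) = (c, fps_X) \<otimes>\<^bsub>riordan\<^esub> (1, \<phi>)"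
    using yc q0 p0 by (simp add: inv_appell R_mult c_def)
  then have "inv\<^bsub>riordan\<^esub> (q, fps_X) \<otimes>\<^bsub>riordan\<^esub> inv\<^bsub>riordan\<^esub> (inv\<^bsub>riordan\<^esub> (1, \<phi>))
     \<otimes>\<^bsub>riordan\<^esub> (q, fps_X) \<otimes>\<^bsub>riordan\<^esub> inv\<^bsub>riordan\<^esub> (1, \<phi>) =
     (c, fps_X) \<otimes>\<^bsub>riordan\<^esub> ((1, \<phi>) \<otimes>\<^bsub>riordan\<^esub> inv\<^bsub>riordan\<^esub> (1, \<phi>))"
    using yc cc by (simp add: R.m_assoc)
  also have "\<dots> = (c, fps_X)" using yc cc by (simp add: R_one R_mult)
  finally show ?thesis by (simp add: c_def)
qed

lemma key_estimate:
  assumes N: "N \<ge> 2*n+2"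
  defines "k \<equiv> 2*n+1"
  defines "\<phi> \<equiv> fps_X + fps_X ^ (N - k + 1) :: bit fps"
  shows "eqm (N+1) (inverse (1 + fps_X ^ k) * ((1 + fps_X ^ k) oo \<phi>)) (1 + fps_X ^ N)"
proof -
  define j where "j = N - k"
  have j1: "j \<ge> 1" and Nkj: "N = k + j" using N by (auto simp: j_def k_def)
  have p0: "\<phi> $ 0 = 0" by (simp add: \<phi>_def)
  have pe: "\<phi> = fps_X * (1 + fps_X ^ j)" by (simp add: \<phi>_def j_def algebra_simps)
  have qo: "(1 + fps_X ^ k) oo \<phi> = 1 + \<phi> ^ k"
    by (simp add: fps_compose_add_distrib fps_X_power_compose[OF p0])
  have sq: "(1 + fps_X ^ j) ^ 2 = (1 :: bit fps) + fps_X ^ (2*j)"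
    by (simp add: frob power_mult[symmetric] mult.commute)
  have "(1 + fps_X ^ j) ^ k = (1 + fps_X ^ j) * ((1 + fps_X ^ j :: bit fps) ^ 2) ^ n"
    by (simp add: k_def power_mult[symmetric])
  also have "\<dots> = (1 + fps_X ^ j) * (1 + fps_X ^ (2*j)) ^ n" by (simp only: sq)
  finally have pk: "(1 + fps_X ^ j :: bit fps) ^ k = (1 + fps_X ^ j) * (1 + fps_X ^ (2*j)) ^ n" .
  have "eqm (2*j) (fps_X ^ (2*j) * 1) 0" by (rule eqm_Xpow0)
  then have "eqm (j+1) (fps_X ^ (2*j)) 0" using j1 by (auto intro: eqm_mono)
  then have "eqm (j+1) (1 + fps_X ^ (2*j)) (1 + 0)" by (rule eqm_add[OF eqm_refl])
  then have P: "eqm (j+1) ((1 + fps_X ^ (2*j)) ^ n) 1" using eqm_power[of "j+1" "1 + fps_X ^ (2*j)" "1 + 0" n] by simp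
  have "eqm (j+1) ((1 + fps_X ^ j) ^ k) ((1 + fps_X ^ j) * 1)"
    unfolding pk by (rule eqm_mult[OF eqm_refl P])
  then have "eqm (k + (j+1)) (fps_X ^ k * (1 + fps_X ^ j) ^ k) (fps_X ^ k * ((1 + fps_X ^ j) * 1))"
    by (rule eqm_Xpow)
  moreover have "\<phi> ^ k = fps_X ^ k * (1 + fps_X ^ j) ^ k" unfolding pe by (simp only: power_mult_distrib)
  moreover have "fps_X ^ k * ((1 + fps_X ^ j) * 1) = fps_X ^ k + (fps_X ^ N :: bit fps)"
    unfolding Nkj by (simp add: algebra_simps power_add)
  ultimately have e1: "eqm (N+1) (\<phi> ^ k) (fps_X ^ k + fps_X ^ N)"
    using Nkj by simp
  have e2: "eqm (N+1) (fps_X ^ (N + k) * 1) 0" by (rule eqm_mono[OF eqm_Xpow0]) (simp add: k_def)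
  have "(1 + fps_X ^ k) * (1 + fps_X ^ N) = 1 + (fps_X ^ k + fps_X ^ N) + fps_X ^ (N + k) * (1::bit fps)"
    by (simp add: algebra_simps power_add)
  then have e3: "eqm (N+1) ((1 + fps_X ^ k) * (1 + fps_X ^ N)) (1 + (fps_X ^ k + fps_X ^ N))"
    using eqm_add[OF eqm_refl e2] by simp
  have "eqm (N+1) ((1 + fps_X ^ k) oo \<phi>) ((1 + fps_X ^ k) * (1 + fps_X ^ N))"
    unfolding qo using eqm_trans[OF eqm_add[OF eqm_refl[of _ 1] e1] eqm_sym[OF e3]] by simp
  then have "eqm (N+1) (inverse (1 + fps_X ^ k) * ((1 + fps_X ^ k) oo \<phi>))
     (inverse (1 + fps_X ^ k) * ((1 + fps_X ^ k) * (1 + fps_X ^ N)))"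
    by (rule eqm_mult[OF eqm_refl])
  moreover have "inverse (1 + fps_X ^ k) * ((1 + fps_X ^ k) * (1 + fps_X ^ N)) = (1 + fps_X ^ N :: bit fps)"
    by (simp add: mult.assoc[symmetric] inverse_mult_eq_1 k_def)
  ultimately show ?thesis by simp
qed


lemma dir2: "appell_m (2*n - 1) \<subseteq> lcs (Suc n)"
proof (induction n)
  case 0
  show ?case by (auto simp: appell_m_def R_carrier')
next
  case (Suc n)
  show ?case
  proof
    fix a assume a: "a \<in> appell_m (2 * Suc n - 1)"
    then obtain g where ag: "a = (g, fps_X)" and g0: "g $ 0 = 1"
        and gi: "\<And>i. 1 \<le> i \<Longrightarrow> i \<le> 2*n+1 \<Longrightarrow> g $ i = 0"
      by (auto simp: appell_m_def)
    have "a \<in> H" if H: "subgroup H riordan" "rclosed H"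
        "commutator_set (lcs (Suc n)) (carrier riordan) \<subseteq> H" for H
    proof -
      interpret H: subgroup H riordan by (rule H(1))
      have C: "\<exists>c. (c, fps_X) \<in> H \<and> eqm (N+1) c (1 + fps_X ^ N)" if N: "N \<ge> 2*n+2" for N
      proof -
        define k where "k = 2*n+1"
        define \<phi> :: "bit fps" where "\<phi> = fps_X + fps_X ^ (N - k + 1)"
        define q :: "bit fps" where "q = 1 + fps_X ^ k"
        have q0: "q $ 0 = 1" by (simp add: q_def k_def)
        have p0: "\<phi> $ 0 = 0" by (simp add: \<phi>_def)
        have p1: "\<phi> $ 1 = 1" using N by (simp add: \<phi>_def k_def)
        have "(q, fps_X) \<in> appell_m (2*n - 1)" by (auto simp: appell_m_def q_def k_def)
        then have x: "(q, fps_X) \<in> lcs (Suc n)" using Suc.IH by blast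
        have y: "inv\<^bsub>riordan\<^esub> (1, \<phi>) \<in> carrier riordan" using p0 p1 by (simp add: R_carrier')
        have "inv\<^bsub>riordan\<^esub> (q, fps_X) \<otimes>\<^bsub>riordan\<^esub> inv\<^bsub>riordan\<^esub> (inv\<^bsub>riordan\<^esub> (1, \<phi>))
           \<otimes>\<^bsub>riordan\<^esub> (q, fps_X) \<otimes>\<^bsub>riordan\<^esub> inv\<^bsub>riordan\<^esub> (1, \<phi>) \<in> H"
          using H(3) x y unfolding commutator_set_def by blast
        then have "(inverse q * (q oo \<phi>), fps_X) \<in> H" using comm_appell[OF q0 p0 p1] by simp
        moreover have "eqm (N+1) (inverse q * (q oo \<phi>)) (1 + fps_X ^ N)"
          using key_estimate[OF N] unfolding q_def \<phi>_def k_def .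
        ultimately show ?thesis by blast
      qed
      have approx: "\<exists>q. (q, fps_X) \<in> H \<and> (\<forall>i < m + (2*n+2). q $ i = g $ i)" for m
      proof (induction m)
        case 0
        have "(1, fps_X) \<in> H" using H.one_closed by (simp add: R_one)
        moreover have "\<forall>i < 0 + (2*n+2). (1::bit fps) $ i = g $ i"
          using g0 gi by (auto simp: less_Suc_eq_le)
        ultimately show ?case by blast
      next
        case (Suc m)
        then obtain q where q: "(q, fps_X) \<in> H" "\<forall>i < m + (2*n+2). q $ i = g $ i" by blast
        define M where "M = m + (2*n+2)"
        show ?case
        proof (cases "q $ M = g $ M")
          case True
          then show ?thesis using q unfolding M_def by (auto simp: less_Suc_eq)
        next
          case False
          obtain c where c: "(c, fps_X) \<in> H" "eqm (M+1) c (1 + fps_X ^ M)"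
            using C[of M] by (auto simp: M_def)
          have "(q, fps_X) \<otimes>\<^bsub>riordan\<^esub> (c, fps_X) \<in> H" using q(1) c(1) by (rule H.m_closed)
          then have qc: "(q * c, fps_X) \<in> H" by (simp add: R_mult)
          have e: "eqm (M+1) (q * c) (q + fps_X ^ M * q)"
            using eqm_mult[OF eqm_refl c(2), of q] by (simp add: algebra_simps)
          have q0: "q $ 0 = 1" using q(2) g0 by (simp add: M_def)
          have "\<forall>i < Suc m + (2*n+2). (q * c) $ i = g $ i"
          proof (intro allI impI)
            fix i assume "i < Suc m + (2*n+2)"
            then have i: "i < M + 1" by (simp add: M_def)
            then have "(q * c) $ i = (q + fps_X ^ M * q) $ i" using e by (simp add: eqm_def)
            also have "\<dots> = q $ i + (if i < M then 0 else q $ (i - M))" by (simp add: fps_X_power_mult_nth)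
            also have "\<dots> = g $ i"
            proof (cases "i < M")
              case True then show ?thesis using q(2) by (simp add: M_def)
            next
              case False
              then have "i = M" using i by simp
              then show ?thesis using False \<open>q $ M \<noteq> g $ M\<close> q0
                by (cases "q $ M"; cases "g $ M") auto
            qed
            finally show "(q * c) $ i = g $ i" .
          qed
          then show ?thesis using qc by blast
        qed
      qed
      have ac: "a \<in> carrier riordan" using g0 by (simp add: ag R_carrier')
      have "\<forall>N. \<exists>s\<in>H. agree_upto N s a"
      proof
        fix N
        obtain q where "(q, fps_X) \<in> H" "\<forall>i < N + (2*n+2). q $ i = g $ i" using approx by blast
        then show "\<exists>s\<in>H. agree_upto N s a" unfolding ag agree_upto_def by (intro bexI[of _ "(q, fps_X)"]) auto
      qed
      then show "a \<in> H" using H(2) ac unfolding rclosed_def by blast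
    qed
    then show "a \<in> lcs (Suc (Suc n))" by (auto simp: closed_comm_def)
  qed
qed

theorem lemma10:
  fixes n :: nat
  assumes "n \<ge> 1"
  shows "appell \<inter> lcs (n + 1) = appell_m (2 * n - 1)"
proof
  show "appell \<inter> lcs (n + 1) \<subseteq> appell_m (2 * n - 1)" by (rule dir1)
  have "appell_m (2 * n - 1) \<subseteq> appell" by (auto simp: appell_m_def appell_def)
  then show "appell_m (2 * n - 1) \<subseteq> appell \<inter> lcs (n + 1)" using dir2[of n] by auto
qed

end
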